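(* Let $n\ge 1$ and let $\rho$ be a representation of $A_n$ over a set $U$. Then the graph on $U$ whose edges are the pairs $\{x,y\}$ with $(x,y)\in\rho(r)$ contains a clique of size $n^2$.
   Context: For $n\ge 1$, $A_n$ denotes the finite integral symmetric relation algebra with atoms $1'$, $r$, $b_1,\dots,b_n$, all symmetric, in which a diversity cycle $xyz$ is mandatory (i.e. $x;y\ge z$) if and only if it involves $r$, and forbidden (i.e. $x;y\cdot z=0$) otherwise. A representation over a set $U$ is an embedding $\rho$ into the full relation algebra $\langle\mathcal P(U\times U),\cup,{}^c,\circ,{}^{-1},\mathrm{Id}_U\rangle$. *)

theory Defs
  imports Main
begin

datatype atom = One | R | B nat

definition atoms :: "nat \<Rightarrow> atom set" where
  "atoms n = {One, R} \<union> B ` {1..n}"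

definition div_atoms :: "nat \<Rightarrow> atom set" where
  "div_atoms n = atoms n - {One}"

text \<open>Composition of two atoms of A_n (all atoms symmetric, integral):
  1';a = a;1' = a; for diversity atoms x,y: x;y contains 1' iff x = y, and
  contains a diversity atom z iff the cycle xyz involves r.\<close>
definition atom_comp :: "nat \<Rightarrow> atom \<Rightarrow> atom \<Rightarrow> atom set" where
  "atom_comp n a b =
     (if a = One then {b}
      else if b = One then {a}
      else {c \<in> div_atoms n. a = R \<or> b = R \<or> c = R} \<union> (if a = b then {One} else {}))"

text \<open>Elements of A_n are sets of atoms (subsets of atoms n).\<close>
definition An_comp :: "nat \<Rightarrow> atom set \<Rightarrow> atom set \<Rightarrow> atom set" where
  "An_comp n X Y = (\<Union>a\<in>X. \<Union>b\<in>Y. atom_comp n a b)"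

definition An_compl :: "nat \<Rightarrow> atom set \<Rightarrow> atom set" where
  "An_compl n X = atoms n - X"

text \<open>All atoms are symmetric, so converse is the identity map on A_n.\<close>
definition An_conv :: "atom set \<Rightarrow> atom set" where
  "An_conv X = X"

definition is_rep :: "nat \<Rightarrow> 'u set \<Rightarrow> (atom set \<Rightarrow> ('u \<times> 'u) set) \<Rightarrow> bool" where
  "is_rep n U \<rho> \<longleftrightarrow>
     (\<forall>X \<subseteq> atoms n. \<forall>Y \<subseteq> atoms n. \<rho> (X \<union> Y) = \<rho> X \<union> \<rho> Y) \<and>
     (\<forall>X \<subseteq> atoms n. \<rho> (An_compl n X) = (U \<times> U) - \<rho> X) \<and>
     (\<forall>X \<subseteq> atoms n. \<forall>Y \<subseteq> atoms n. \<rho> (An_comp n X Y) = \<rho> X O \<rho> Y) \<and>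
     (\<forall>X \<subseteq> atoms n. \<rho> (An_conv X) = converse (\<rho> X)) \<and>
     \<rho> {One} = Id_on U \<and>
     inj_on \<rho> (Pow (atoms n))"

end

theory Submission
  imports Defs
begin

lemma atB: "i \<in> {1..n} \<Longrightarrow> {B i} \<subseteq> atoms n"
  by (auto simp: atoms_def)

lemma atR: "{R} \<subseteq> atoms n" and atO: "{One} \<subseteq> atoms n"
  by (auto simp: atoms_def)

lemma comp_BB: "i \<in> {1..n} \<Longrightarrow> j \<in> {1..n} \<Longrightarrow>
   R \<in> An_comp n {B i} {B j} \<and> An_comp n {B i} {B j} \<subseteq> {R, One}"
  by (auto simp: An_comp_def atom_comp_def div_atoms_def atoms_def)

lemma compl_compl: "X \<subseteq> atoms n \<Longrightarrow> An_compl n (An_compl n X) = X"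
  by (auto simp: An_compl_def)

lemma compl_sub: "An_compl n X \<subseteq> atoms n"
  by (auto simp: An_compl_def)

locale rep =
  fixes n U \<rho>
  assumes r: "is_rep n U \<rho>"
begin

lemma un: "X \<subseteq> atoms n \<Longrightarrow> Y \<subseteq> atoms n \<Longrightarrow> \<rho> (X \<union> Y) = \<rho> X \<union> \<rho> Y"
  using r by (simp add: is_rep_def)
lemma cp: "X \<subseteq> atoms n \<Longrightarrow> \<rho> (An_compl n X) = (U \<times> U) - \<rho> X"
  using r by (simp add: is_rep_def)
lemma co: "X \<subseteq> atoms n \<Longrightarrow> Y \<subseteq> atoms n \<Longrightarrow> \<rho> (An_comp n X Y) = \<rho> X O \<rho> Y"
  using r by (simp add: is_rep_def)
lemma cv: "X \<subseteq> atoms n \<Longrightarrow> \<rho> X = converse (\<rho> X)"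
  using r by (simp add: is_rep_def An_conv_def)
lemma idd: "\<rho> {One} = Id_on U"
  using r by (simp add: is_rep_def)
lemma ij: "inj_on \<rho> (Pow (atoms n))"
  using r by (simp add: is_rep_def)

lemma sub: "X \<subseteq> atoms n \<Longrightarrow> \<rho> X \<subseteq> U \<times> U"
  using cp[of "An_compl n X"] compl_compl[of X n] compl_sub[of n X] by auto

lemma mono: "X \<subseteq> Y \<Longrightarrow> Y \<subseteq> atoms n \<Longrightarrow> \<rho> X \<subseteq> \<rho> Y"
  using un[of X Y] by (metis Un_absorb1 dual_order.trans sup_ge1)

lemma disj: "X \<subseteq> atoms n \<Longrightarrow> Y \<subseteq> atoms n \<Longrightarrow> X \<inter> Y = {} \<Longrightarrow> \<rho> X \<inter> \<rho> Y = {}"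
proof -
  assume a: "X \<subseteq> atoms n" "Y \<subseteq> atoms n" "X \<inter> Y = {}"
  have "X \<subseteq> An_compl n Y" using a by (auto simp: An_compl_def)
  then have "\<rho> X \<subseteq> \<rho> (An_compl n Y)" using mono compl_sub by blast
  then show ?thesis using cp[OF a(2)] by auto
qed

lemma empty: "\<rho> {} = {}"
proof -
  have "\<rho> {} \<subseteq> \<rho> {One}" using mono atO by blast
  moreover have "\<rho> {} \<inter> \<rho> {One} = {}" using disj[of "{}" "{One}"] atO by auto
  ultimately show ?thesis by auto
qed

lemma Rne: "\<rho> {R} \<noteq> {}"
  using ij empty atR[of n] unfolding inj_on_def by (metis Pow_iff empty_subsetI insert_not_empty)

end

theorem mainTheorem9:
  fixes n :: nat and U :: "'u set" and \<rho> :: "atom set \<Rightarrow> ('u \<times> 'u) set"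
  assumes "n \<ge> 1" and "is_rep n U \<rho>"
  shows "\<exists>C \<subseteq> U. card C = n ^ 2 \<and> (\<forall>x\<in>C. \<forall>y\<in>C. x \<noteq> y \<longrightarrow> (x, y) \<in> \<rho> {R})"
proof -
  interpret rep n U \<rho> using assms(2) by unfold_locales
  obtain x u where xu: "(x, u) \<in> \<rho> {R}" using Rne by auto
  have ex: "\<exists>w. (x, w) \<in> \<rho> {B (fst p)} \<and> (w, u) \<in> \<rho> {B (snd p)}"
    if p: "p \<in> {1..n} \<times> {1..n}" for p
  proof -
    have i: "fst p \<in> {1..n}" and j: "snd p \<in> {1..n}" using p by auto
    have "{R} \<subseteq> An_comp n {B (fst p)} {B (snd p)}" using comp_BB[OF i j] by auto
    moreover have "An_comp n {B (fst p)} {B (snd p)} \<subseteq> atoms n"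
      using comp_BB[OF i j] atR[of n] atO[of n] by blast
    ultimately have "\<rho> {R} \<subseteq> \<rho> (An_comp n {B (fst p)} {B (snd p)})"
      by (rule mono)
    then have "\<rho> {R} \<subseteq> \<rho> {B (fst p)} O \<rho> {B (snd p)}"
      using co[OF atB[OF i] atB[OF j]] by simp
    then show ?thesis using xu by auto
  qed
  define w where "w p = (SOME w. (x, w) \<in> \<rho> {B (fst p)} \<and> (w, u) \<in> \<rho> {B (snd p)})" for p
  have w: "(x, w p) \<in> \<rho> {B (fst p)} \<and> (w p, u) \<in> \<rho> {B (snd p)}"
    if "p \<in> {1..n} \<times> {1..n}" for p
    unfolding w_def using someI_ex[OF ex[OF that]] .
  have BB: "a = b" if "a \<in> {1..n}" "b \<in> {1..n}" "(s, t) \<in> \<rho> {B a}" "(s, t) \<in> \<rho> {B b}" for a b s t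
    using disj[OF atB[OF that(1)] atB[OF that(2)]] that(3,4) by auto
  have inj: "inj_on w ({1..n} \<times> {1..n})"
  proof (rule inj_onI)
    fix p q assume p: "p \<in> {1..n} \<times> {1..n}" and q: "q \<in> {1..n} \<times> {1..n}" and e: "w p = w q"
    have "fst p = fst q" using BB[of "fst p" "fst q" x "w p"] w[OF p] w[OF q] e p q by auto
    moreover have "snd p = snd q" using BB[of "snd p" "snd q" "w p" u] w[OF p] w[OF q] e p q by auto
    ultimately show "p = q" by (simp add: prod_eq_iff)
  qed
  define C where "C = w ` ({1..n} \<times> {1..n})"
  have "card C = n ^ 2" unfolding C_def using card_image[OF inj] by (simp add: power2_eq_square)
  moreover have "C \<subseteq> U"
  proof
    fix c assume "c \<in> C"
    then obtain p where p: "p \<in> {1..n} \<times> {1..n}" and c: "c = w p" by (auto simp: C_def)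
    have "fst p \<in> {1..n}" using p by auto
    then show "c \<in> U" using sub[OF atB] w[OF p] c by blast
  qed
  moreover have "(c, d) \<in> \<rho> {R}" if cd: "c \<in> C" "d \<in> C" "c \<noteq> d" for c d
  proof -
    obtain p where p: "p \<in> {1..n} \<times> {1..n}" and c: "c = w p" using cd(1) unfolding C_def by blast
    obtain q where q: "q \<in> {1..n} \<times> {1..n}" and d: "d = w q" using cd(2) unfolding C_def by blast
    have i: "fst p \<in> {1..n}" and j: "fst q \<in> {1..n}" using p q by auto
    have "(c, x) \<in> \<rho> {B (fst p)}" using w[OF p] c cv[OF atB[OF i]] by auto
    moreover have "(x, d) \<in> \<rho> {B (fst q)}" using w[OF q] d by auto
    ultimately have "(c, d) \<in> \<rho> (An_comp n {B (fst p)} {B (fst q)})"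
      using co[OF atB[OF i] atB[OF j]] by auto
    moreover have "\<rho> (An_comp n {B (fst p)} {B (fst q)}) \<subseteq> \<rho> {R, One}"
      using comp_BB[OF i j] atR[of n] atO[of n] by (intro mono) auto
    moreover have "\<rho> {R, One} = \<rho> {R} \<union> \<rho> {One}" using un[OF atR atO] by (simp add: insert_commute)
    ultimately show ?thesis using idd \<open>c \<noteq> d\<close> by auto
  qed
  ultimately show ?thesis by blast
qed

end
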